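(* Let $G>I$ be a finite group with $Z(G)=I$ and $(C_1,C_2,C_3)$ a class vector of $G$ with $l^i(C_1,C_2,C_3)>0$. Let $[\underline{\sigma}]=[\sigma_1,\sigma_2,\sigma_3]\in\Sigma^i(C_1,C_2,C_3)$ with $\sigma_1^4=\sigma_2^4=\iota$ and $G=\langle\sigma_1^{-2}\sigma_3\sigma_1^2,\sigma_1^{-1}\sigma_3\sigma_1,\sigma_3\rangle$, and let $C=C_3$. Then $$v=[\sigma_1^{-2}\sigma_3\sigma_1^2,\ \sigma_1^{-1}\sigma_3\sigma_1,\ \sigma_3,\ \sigma_1^{-3}\sigma_3\sigma_1^3]\in\Sigma^i(C,C,C,C)$$ and $v^{\alpha_{4,0}}=v$, where $\alpha_{4,0}=\beta_2\beta_3\beta_4$.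
   Context: $\iota$ is the identity and $I$ the trivial group. For conjugacy classes $C_1,\dots,C_m$, $\Sigma^i(C_1,\dots,C_m)$ is the set of $G$-conjugacy classes $[\sigma_1,\dots,\sigma_m]$ (simultaneous conjugation) of tuples with $\sigma_j\in C_j$, $\langle\sigma_1,\dots,\sigma_m\rangle=G$, $\sigma_1\cdots\sigma_m=\iota$, and $l^i(C_1,\dots,C_m)=|\Sigma^i(C_1,\dots,C_m)|$. The element $\alpha_{4,0}=\beta_2\beta_3\beta_4$ of the Hurwitz braid group $H_4$ acts by $[\sigma_1,\sigma_2,\sigma_3,\sigma_4]^{\alpha_{4,0}}=[\sigma_2,\sigma_3,\sigma_4,\sigma_1]$. *)

theory Defs
  imports "HOL-Algebra.Algebra"
begin

definition group_center :: "('a, 'b) monoid_scheme \<Rightarrow> 'a set" where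
  "group_center G = {z \<in> carrier G. \<forall>g \<in> carrier G. z \<otimes>\<^bsub>G\<^esub> g = g \<otimes>\<^bsub>G\<^esub> z}"

definition conj_class :: "('a, 'b) monoid_scheme \<Rightarrow> 'a \<Rightarrow> 'a set" where
  "conj_class G x = {inv\<^bsub>G\<^esub> g \<otimes>\<^bsub>G\<^esub> x \<otimes>\<^bsub>G\<^esub> g | g. g \<in> carrier G}"

definition is_conj_class :: "('a, 'b) monoid_scheme \<Rightarrow> 'a set \<Rightarrow> bool" where
  "is_conj_class G C \<longleftrightarrow> (\<exists>x \<in> carrier G. C = conj_class G x)"

definition tuple_conj :: "('a, 'b) monoid_scheme \<Rightarrow> 'a \<Rightarrow> 'a list \<Rightarrow> 'a list" where
  "tuple_conj G g xs = map (\<lambda>s. inv\<^bsub>G\<^esub> g \<otimes>\<^bsub>G\<^esub> s \<otimes>\<^bsub>G\<^esub> g) xs"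

definition tuple_class :: "('a, 'b) monoid_scheme \<Rightarrow> 'a list \<Rightarrow> 'a list set" where
  "tuple_class G xs = {tuple_conj G g xs | g. g \<in> carrier G}"

definition gprod :: "('a, 'b) monoid_scheme \<Rightarrow> 'a list \<Rightarrow> 'a" where
  "gprod G xs = foldr (\<lambda>a b. a \<otimes>\<^bsub>G\<^esub> b) xs \<one>\<^bsub>G\<^esub>"

definition admissible :: "('a, 'b) monoid_scheme \<Rightarrow> 'a set list \<Rightarrow> 'a list \<Rightarrow> bool" where
  "admissible G Cs xs \<longleftrightarrow>
     length xs = length Cs \<and> (\<forall>j < length xs. xs ! j \<in> Cs ! j)
     \<and> generate G (set xs) = carrier G \<and> gprod G xs = \<one>\<^bsub>G\<^esub>"

definition Sigma_i :: "('a, 'b) monoid_scheme \<Rightarrow> 'a set list \<Rightarrow> 'a list set set" where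
  "Sigma_i G Cs = tuple_class G ` {xs. admissible G Cs xs}"

definition l_i :: "('a, 'b) monoid_scheme \<Rightarrow> 'a set list \<Rightarrow> nat" where
  "l_i G Cs = card (Sigma_i G Cs)"

text \<open>Action of alpha_{4,0} = beta_2 beta_3 beta_4 on a class of 4-tuples:
  [s1,s2,s3,s4] maps to [s2,s3,s4,s1] (rotate1), applied to every representative.\<close>
definition alpha40_act :: "'a list set \<Rightarrow> 'a list set" where
  "alpha40_act K = rotate1 ` K"

end

theory Submission
  imports Defs
begin


lemma (in group) cancel1 [simp]: "g \<in> carrier G \<Longrightarrow> y \<in> carrier G \<Longrightarrow> g \<otimes> (inv g \<otimes> y) = y"
  by (simp add: m_assoc[symmetric])
lemma (in group) cancel2 [simp]: "g \<in> carrier G \<Longrightarrow> y \<in> carrier G \<Longrightarrow> inv g \<otimes> (g \<otimes> y) = y"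
  by (simp add: m_assoc[symmetric])

lemma (in group) tc_tc:
  assumes "g \<in> carrier G" "h \<in> carrier G" "set xs \<subseteq> carrier G"
  shows "tuple_conj G g (tuple_conj G h xs) = tuple_conj G (h \<otimes> g) xs"
  unfolding tuple_conj_def using assms
  by (auto simp: inv_mult_group m_assoc subset_iff)

lemma (in group) conj_class_closed:
  assumes "x \<in> carrier G" "y \<in> conj_class G x" "g \<in> carrier G"
  shows "inv g \<otimes> y \<otimes> g \<in> conj_class G x"
proof -
  obtain h where h: "h \<in> carrier G" "y = inv h \<otimes> x \<otimes> h"
    using assms(2) unfolding conj_class_def by auto
  have "inv g \<otimes> y \<otimes> g = inv (h \<otimes> g) \<otimes> x \<otimes> (h \<otimes> g)"
    using h assms by (simp add: inv_mult_group m_assoc)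
  thus ?thesis unfolding conj_class_def using h assms by blast
qed

lemma (in group) conj_class_closed':
  assumes "x \<in> carrier G" "inv g \<otimes> y \<otimes> g \<in> conj_class G x" "g \<in> carrier G" "y \<in> carrier G"
  shows "y \<in> conj_class G x"
proof -
  have "inv (inv g) \<otimes> (inv g \<otimes> y \<otimes> g) \<otimes> inv g = y"
    using assms by (simp add: m_assoc)
  thus ?thesis using conj_class_closed[OF assms(1,2), of "inv g"] assms by simp
qed

lemma (in group) pow2: "x \<in> carrier G \<Longrightarrow> x [^] (2::nat) = x \<otimes> x"
  by (simp add: numeral_eq_Suc)
lemma (in group) pow3: "x \<in> carrier G \<Longrightarrow> x [^] (3::nat) = x \<otimes> (x \<otimes> x)"
  by (simp add: numeral_eq_Suc m_assoc)
lemma (in group) pow4: "x \<in> carrier G \<Longrightarrow> x [^] (4::nat) = x \<otimes> (x \<otimes> (x \<otimes> x))"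
  by (simp add: numeral_eq_Suc m_assoc)

theorem proposition8:
  fixes G (structure) and C1 C2 C3 :: "'a set" and s1 s2 s3 :: 'a
  assumes "group G" and "finite (carrier G)"
    and "carrier G \<noteq> {\<one>}"
    and "group_center G = {\<one>}"
    and "is_conj_class G C1" and "is_conj_class G C2" and "is_conj_class G C3"
    and "l_i G [C1, C2, C3] > 0"
    and "s1 \<in> carrier G" and "s2 \<in> carrier G" and "s3 \<in> carrier G"
    and "tuple_class G [s1, s2, s3] \<in> Sigma_i G [C1, C2, C3]"
    and "s1 [^] (4::nat) = \<one>" and "s2 [^] (4::nat) = \<one>"
    and "carrier G = generate G {inv s1 [^] (2::nat) \<otimes> s3 \<otimes> s1 [^] (2::nat),
                                 inv s1 \<otimes> s3 \<otimes> s1, s3}"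
  shows "tuple_class G [inv s1 [^] (2::nat) \<otimes> s3 \<otimes> s1 [^] (2::nat),
                        inv s1 \<otimes> s3 \<otimes> s1, s3,
                        inv s1 [^] (3::nat) \<otimes> s3 \<otimes> s1 [^] (3::nat)]
           \<in> Sigma_i G [C3, C3, C3, C3]
       \<and> alpha40_act (tuple_class G [inv s1 [^] (2::nat) \<otimes> s3 \<otimes> s1 [^] (2::nat),
                        inv s1 \<otimes> s3 \<otimes> s1, s3,
                        inv s1 [^] (3::nat) \<otimes> s3 \<otimes> s1 [^] (3::nat)])
         = tuple_class G [inv s1 [^] (2::nat) \<otimes> s3 \<otimes> s1 [^] (2::nat),
                        inv s1 \<otimes> s3 \<otimes> s1, s3,
                        inv s1 [^] (3::nat) \<otimes> s3 \<otimes> s1 [^] (3::nat)]"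
  proof -
  interpret group G by fact
  let ?a = s1 and ?c = s3
  note car = \<open>s1 \<in> carrier G\<close> \<open>s2 \<in> carrier G\<close> \<open>s3 \<in> carrier G\<close>
  have a4: "s1 \<otimes> (s1 \<otimes> (s1 \<otimes> s1)) = \<one>" using assms(13) car by (simp add: pow4)
  have a4x: "s1 \<otimes> (s1 \<otimes> (s1 \<otimes> (s1 \<otimes> x))) = x" if "x \<in> carrier G" for x
  proof -
    have "s1 \<otimes> (s1 \<otimes> (s1 \<otimes> (s1 \<otimes> x))) = (s1 \<otimes> (s1 \<otimes> (s1 \<otimes> s1))) \<otimes> x"
      using car that by (simp add: m_assoc)
    thus ?thesis using a4 that by simp
  qed
  have ia: "inv s1 = s1 \<otimes> (s1 \<otimes> s1)"
  proof -
    have "inv s1 \<otimes> (s1 \<otimes> (s1 \<otimes> (s1 \<otimes> s1))) = s1 \<otimes> (s1 \<otimes> s1)"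
      using car by (simp only: cancel2 m_closed inv_closed)
    thus ?thesis using a4 car by simp
  qed
  obtain xs where adm: "admissible G [C1, C2, C3] xs" and tc: "tuple_class G [s1, s2, s3] = tuple_class G xs"
    using assms(12) unfolding Sigma_i_def by auto
  have "[s1, s2, s3] \<in> tuple_class G [s1, s2, s3]"
    unfolding tuple_class_def tuple_conj_def using car by (auto intro!: exI[of _ \<one>])
  then obtain g where g: "g \<in> carrier G" "[s1, s2, s3] = tuple_conj G g xs"
    using tc unfolding tuple_class_def by auto
  have lx: "length xs = 3" using adm unfolding admissible_def by simp
  then obtain x1 x2 x3 where xs: "xs = [x1, x2, x3]"
    by (metis (no_types, lifting) length_0_conv length_Suc_conv numeral_3_eq_3)
  have gen: "generate G (set xs) = carrier G" using adm unfolding admissible_def by simp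
  have xcar: "set xs \<subseteq> carrier G" using gen generate.incl[of _ "set xs" G] by blast
  hence xc: "x1 \<in> carrier G" "x2 \<in> carrier G" "x3 \<in> carrier G" using xs by auto
  have e: "s1 = inv g \<otimes> x1 \<otimes> g" "s2 = inv g \<otimes> x2 \<otimes> g" "s3 = inv g \<otimes> x3 \<otimes> g"
    using g(2) xs unfolding tuple_conj_def by auto
  have p: "x1 \<otimes> (x2 \<otimes> x3) = \<one>" using adm xs xc unfolding admissible_def gprod_def by simp
  have "s1 \<otimes> (s2 \<otimes> s3) = inv g \<otimes> (x1 \<otimes> (x2 \<otimes> x3)) \<otimes> g"
    using e xc g by (simp add: m_assoc)
  hence p1: "s1 \<otimes> (s2 \<otimes> s3) = \<one>" using p g by simp
  have x3C: "x3 \<in> C3" using adm xs unfolding admissible_def by (auto simp: nth_Cons)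
  obtain z where z: "z \<in> carrier G" "C3 = conj_class G z" using assms(7) unfolding is_conj_class_def by auto
  have s3C: "s3 \<in> C3" using conj_class_closed[OF z(1) _ g(1)] x3C z e by simp
  have s2e: "s2 = inv s1 \<otimes> inv s3"
  proof -
    have "inv s1 \<otimes> (s1 \<otimes> (s2 \<otimes> s3)) = s2 \<otimes> s3"
      using car by (simp only: cancel2 m_closed inv_closed)
    hence h: "s2 \<otimes> s3 = inv s1" using p1 car by simp
    have "(s2 \<otimes> s3) \<otimes> inv s3 = inv s1 \<otimes> inv s3" using h by simp
    thus ?thesis using car by (simp add: m_assoc)
  qed
  have "inv (s2 \<otimes> (s2 \<otimes> (s2 \<otimes> s2))) = \<one>" using assms(14) car by (simp add: pow4)
  hence ca4: "s3 \<otimes> (s1 \<otimes> (s3 \<otimes> (s1 \<otimes> (s3 \<otimes> (s1 \<otimes> (s3 \<otimes> s1)))))) = \<one>"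
    using car by (simp add: s2e inv_mult_group m_assoc)
  have ca4x: "s3 \<otimes> (s1 \<otimes> (s3 \<otimes> (s1 \<otimes> (s3 \<otimes> (s1 \<otimes> (s3 \<otimes> (s1 \<otimes> x))))))) = x" if "x \<in> carrier G" for x
  proof -
    have "s3 \<otimes> (s1 \<otimes> (s3 \<otimes> (s1 \<otimes> (s3 \<otimes> (s1 \<otimes> (s3 \<otimes> (s1 \<otimes> x))))))) =
      (s3 \<otimes> (s1 \<otimes> (s3 \<otimes> (s1 \<otimes> (s3 \<otimes> (s1 \<otimes> (s3 \<otimes> s1))))))) \<otimes> x"
      using car that by (simp add: m_assoc)
    thus ?thesis using ca4 that by simp
  qed
  define v where "v = [inv s1 [^] (2::nat) \<otimes> s3 \<otimes> s1 [^] (2::nat),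
                        inv s1 \<otimes> s3 \<otimes> s1, s3,
                        inv s1 [^] (3::nat) \<otimes> s3 \<otimes> s1 [^] (3::nat)]"
  have v: "v = [s1 \<otimes> (s1 \<otimes> (s3 \<otimes> (s1 \<otimes> s1))), s1 \<otimes> (s1 \<otimes> (s1 \<otimes> (s3 \<otimes> s1))), s3,
                 s1 \<otimes> (s3 \<otimes> (s1 \<otimes> (s1 \<otimes> s1)))]"
    unfolding v_def using car by (simp add: pow2 pow3 ia m_assoc a4x)
  have vcar: "set v \<subseteq> carrier G" using car v by simp
  have rot: "rotate1 v = tuple_conj G (inv s1) v"
    unfolding v tuple_conj_def using car
    apply (simp only: inv_inv list.map)
    by (simp add: ia m_assoc a4x a4)
  have prod: "gprod G v = \<one>"
    unfolding v gprod_def using car by (simp add: m_assoc a4x ca4x a4)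
  have genv: "generate G (set v) = carrier G"
  proof
    show "generate G (set v) \<subseteq> carrier G" using generate_incl[OF vcar] .
    have "{inv s1 [^] (2::nat) \<otimes> s3 \<otimes> s1 [^] (2::nat), inv s1 \<otimes> s3 \<otimes> s1, s3} \<subseteq> set v"
      unfolding v_def by auto
    thus "carrier G \<subseteq> generate G (set v)" using mono_generate assms(15) by metis
  qed
  have inC: "inv h \<otimes> s3 \<otimes> h \<in> C3" if "h \<in> carrier G" for h
    using conj_class_closed[OF z(1) _ that] s3C z by simp
  have memb: "\<forall>j < length v. v ! j \<in> [C3, C3, C3, C3] ! j"
  proof -
    have "v ! 0 \<in> C3" unfolding v_def using inC[of "s1 [^] (2::nat)"] car
      by (simp add: nat_pow_inv)
    moreover have "v ! 1 \<in> C3" unfolding v_def using inC[of "s1"] car by simp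
    moreover have "v ! 2 \<in> C3" unfolding v_def using s3C by simp
    moreover have "v ! 3 \<in> C3" unfolding v_def using inC[of "s1 [^] (3::nat)"] car
      by (simp add: nat_pow_inv)
    ultimately show ?thesis unfolding v_def by (auto simp: less_Suc_eq numeral_eq_Suc)
  qed
  have adv: "admissible G [C3, C3, C3, C3] v"
    unfolding admissible_def using memb genv prod by (simp add: v_def)
  have part1: "tuple_class G v \<in> Sigma_i G [C3, C3, C3, C3]"
    unfolding Sigma_i_def using adv by blast
  have rc: "rotate1 (tuple_conj G h v) = tuple_conj G h (rotate1 v)" for h
    unfolding tuple_conj_def by (cases v) auto
  have ia_car: "inv s1 \<in> carrier G" using car by simp
  have part2: "alpha40_act (tuple_class G v) = tuple_class G v"
  proof
    show "alpha40_act (tuple_class G v) \<subseteq> tuple_class G v"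
    proof
      fix y assume "y \<in> alpha40_act (tuple_class G v)"
      then obtain h where h: "h \<in> carrier G" "y = rotate1 (tuple_conj G h v)"
        unfolding alpha40_act_def tuple_class_def by auto
      hence "y = tuple_conj G (inv s1 \<otimes> h) v" using rc rot tc_tc[OF h(1) ia_car vcar] by simp
      thus "y \<in> tuple_class G v" unfolding tuple_class_def using h car by blast
    qed
    show "tuple_class G v \<subseteq> alpha40_act (tuple_class G v)"
    proof
      fix y assume "y \<in> tuple_class G v"
      then obtain h where h: "h \<in> carrier G" "y = tuple_conj G h v"
        unfolding tuple_class_def by auto
      have hh: "s1 \<otimes> h \<in> carrier G" using h car by simp
      have "rotate1 (tuple_conj G (s1 \<otimes> h) v) = tuple_conj G (inv s1 \<otimes> (s1 \<otimes> h)) v"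
        using rc rot tc_tc[OF hh ia_car vcar] by simp
      also have "\<dots> = y" using h car by (simp add: m_assoc[symmetric])
      finally show "y \<in> alpha40_act (tuple_class G v)"
        unfolding alpha40_act_def tuple_class_def using hh by blast
    qed
  qed
  show ?thesis using part1 part2 unfolding v_def by simp
qed

end
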